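(* A nondecreasing sequence of positive integers is the detour sequence of a tree if and only if it is the sequence $1$, or the sequence $2,2$, or it has the form \[(a)_k,\ (a+1)_{k_1},\ (a+2)_{k_2},\ \ldots,\ (m)_{k_l}\] where $m \ge 3$ is an integer, $a=\left\lceil \frac{m+1}{2}\right\rceil$, $l=m-a$, $k_j \ge 2$ for $1\le j\le l$, and $k=1$ if $m$ is odd and $k=2$ if $m$ is even.
   Context: All graphs are finite and simple. The order of a path is its number of vertices. For a vertex $v$ of $G$, $\tau(v)$ is the order of a longest path in $G$ having $v$ as an endvertex. The detour sequence of $G$ is the nondecreasing sequence of the values $\tau(v)$, $v\in V(G)$ (one term per vertex). The notation $(n)_k$ denotes the integer $n$ repeated $k$ times consecutively. *)

theory Defs
  imports Complex_Main "HOL-Library.Multiset"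
begin

definition simple_graph :: "'a set \<Rightarrow> ('a \<Rightarrow> 'a \<Rightarrow> bool) \<Rightarrow> bool" where
  "simple_graph V E \<longleftrightarrow> finite V \<and> (\<forall>x y. E x y \<longrightarrow> E y x)
     \<and> (\<forall>x. \<not> E x x) \<and> (\<forall>x y. E x y \<longrightarrow> x \<in> V \<and> y \<in> V)"

definition is_path :: "'a set \<Rightarrow> ('a \<Rightarrow> 'a \<Rightarrow> bool) \<Rightarrow> 'a list \<Rightarrow> bool" where
  "is_path V E p \<longleftrightarrow> p \<noteq> [] \<and> distinct p \<and> set p \<subseteq> V
     \<and> (\<forall>i. Suc i < length p \<longrightarrow> E (p ! i) (p ! Suc i))"

definition is_cycle :: "'a set \<Rightarrow> ('a \<Rightarrow> 'a \<Rightarrow> bool) \<Rightarrow> 'a list \<Rightarrow> bool" where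
  "is_cycle V E c \<longleftrightarrow> length c \<ge> 3 \<and> is_path V E c \<and> E (last c) (hd c)"

definition connected_graph :: "'a set \<Rightarrow> ('a \<Rightarrow> 'a \<Rightarrow> bool) \<Rightarrow> bool" where
  "connected_graph V E \<longleftrightarrow>
     (\<forall>u\<in>V. \<forall>v\<in>V. \<exists>p. is_path V E p \<and> hd p = u \<and> last p = v)"

definition is_tree :: "'a set \<Rightarrow> ('a \<Rightarrow> 'a \<Rightarrow> bool) \<Rightarrow> bool" where
  "is_tree V E \<longleftrightarrow> simple_graph V E \<and> V \<noteq> {} \<and> connected_graph V E
     \<and> (\<nexists>c. is_cycle V E c)"

definition tau :: "'a set \<Rightarrow> ('a \<Rightarrow> 'a \<Rightarrow> bool) \<Rightarrow> 'a \<Rightarrow> nat" where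
  "tau V E v = Max {length p | p. is_path V E p \<and> (hd p = v \<or> last p = v)}"

definition detour_seq :: "'a set \<Rightarrow> ('a \<Rightarrow> 'a \<Rightarrow> bool) \<Rightarrow> nat list" where
  "detour_seq V E = sorted_list_of_multiset (image_mset (tau V E) (mset_set V))"

end

theory Submission imports Defs begin

lemma is_path_alt: "is_path V E p \<longleftrightarrow> p \<noteq> [] \<and> distinct p \<and> set p \<subseteq> V \<and> successively E p"
  unfolding is_path_def successively_conv_nth by blast

lemma path_rev:
  assumes "simple_graph V E" "is_path V E p" shows "is_path V E (rev p)"
proof -
  have "successively E p" using assms(2) is_path_alt by blast
  hence "successively (\<lambda>a b. E b a) p"
    by (rule successively_mono) (use assms(1) in \<open>auto simp: simple_graph_def\<close>)
  thus ?thesis using assms(2) unfolding is_path_alt by simp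
qed

lemma path_append:
  assumes "is_path V E xs" "is_path V E ys" "set xs \<inter> set ys = {}" "E (last xs) (hd ys)"
  shows "is_path V E (xs @ ys)"
  using assms unfolding is_path_alt by (auto simp: successively_append_iff)

lemma path_take: "is_path V E p \<Longrightarrow> 0 < n \<Longrightarrow> is_path V E (take n p)"
  unfolding is_path_def by (auto dest: in_set_takeD)

lemma path_drop: "is_path V E p \<Longrightarrow> n < length p \<Longrightarrow> is_path V E (drop n p)"
  unfolding is_path_def by (auto dest: in_set_dropD)

lemma path_single: "x \<in> V \<Longrightarrow> is_path V E [x]"
  unfolding is_path_def by auto

lemma path_edge: "simple_graph V E \<Longrightarrow> E x y \<Longrightarrow> is_path V E [x, y]"
  unfolding is_path_def simple_graph_def by (auto simp: nth_Cons split: nat.splits)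

lemma path_hd_last_eq:
  assumes "is_path V E p" "hd p = last p" shows "p = [hd p]"
proof (cases p)
  case Nil then show ?thesis using assms by (simp add: is_path_def)
next
  case (Cons y ys)
  show ?thesis
  proof (cases ys)
    case Nil then show ?thesis using Cons by simp
  next
    case (Cons z zs)
    then have "last p \<in> set ys" using \<open>p = y # ys\<close> by simp
    moreover have "y \<notin> set ys" using assms(1) \<open>p = y # ys\<close> by (simp add: is_path_def)
    ultimately show ?thesis using assms(2) \<open>p = y # ys\<close> by simp
  qed
qed

lemma succ_join: "successively P (xs @ [z]) \<Longrightarrow> successively P (z # ys) \<Longrightarrow> successively P (xs @ z # ys)"
  by (auto simp: successively_append_iff)

lemma unique_path:
  assumes sg: "simple_graph V E" and nc: "\<nexists>c. is_cycle V E c"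
  shows "is_path V E p \<Longrightarrow> is_path V E q \<Longrightarrow> hd p = hd q \<Longrightarrow> last p = last q \<Longrightarrow> p = q"
proof (induction p arbitrary: q)
  case Nil
  then show ?case by (simp add: is_path_def)
next
  case (Cons x p')
  from Cons.prems obtain q' where q: "q = x # q'" 
    by (cases q) (auto simp: is_path_def)
  show ?case
  proof (cases "p' = []")
    case True
    then have "hd q = last q" using Cons.prems q by simp
    then have "q = [hd q]" using path_hd_last_eq Cons.prems by metis
    then show ?thesis using True q by simp
  next
    case p'ne: False
    show ?thesis
    proof (cases "q' = []")
      case True
      then have "hd (x#p') = last (x#p')" using Cons.prems q by simp
      then have "x # p' = [x]" using path_hd_last_eq Cons.prems by (metis list.sel(1))
      then show ?thesis using p'ne by simp
    next
      case q'ne: False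
      have pp': "is_path V E p'" using Cons.prems(1) p'ne unfolding is_path_alt
        by (auto simp: successively_Cons)
      have qq': "is_path V E q'" using Cons.prems(2) q q'ne unfolding is_path_alt
        by (auto simp: successively_Cons)
      have lasteq: "last p' = last q'" using Cons.prems q p'ne q'ne by simp
      show ?thesis
      proof (cases "hd p' = hd q'")
        case True
        then show ?thesis using Cons.IH[OF pp' qq' True lasteq] q by simp
      next
        case hne: False
        have "\<exists>z\<in>set p'. z \<in> set q'" using lasteq p'ne q'ne by (metis last_in_set)
        then obtain A z B where pA: "p' = A @ z # B" and zq: "z \<in> set q'" and Anq: "\<forall>y\<in>set A. y \<notin> set q'"
          using split_list_first_prop[of p' "\<lambda>y. y \<in> set q'"] by blast
        from zq obtain C D where qC: "q' = C @ z # D" by (meson split_list)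
        define c where "c = x # A @ [z] @ rev C"
        have dp: "distinct (x # p')" and dq: "distinct (x # q')" using Cons.prems q unfolding is_path_def by auto
        have sp: "successively E (x # p')" and sq: "successively E (x # q')" using Cons.prems q unfolding is_path_alt by auto
        have symE: "\<And>a b. E a b \<Longrightarrow> E b a" using sg unfolding simple_graph_def by blast
        have "A \<noteq> [] \<or> C \<noteq> []" using hne pA qC by auto
        then have len: "length c \<ge> 3" unfolding c_def by (cases A; cases C) auto
        have dc: "distinct c" unfolding c_def using dp dq pA qC Anq by auto
        have "successively E ((x # A @ [z]) @ B)" using sp pA by simp
        then have sc0: "successively E (x # A @ [z])"
          by (subst (asm) successively_append_iff) blast
        have "successively E (((x # C) @ [z]) @ D)" using sq qC by simp
        then have "successively E ((x # C) @ [z])"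
          by (subst (asm) successively_append_iff) blast
        then have sC: "successively E (C @ [z])" by (simp add: successively_Cons)
        have "successively (\<lambda>a b. E b a) (C @ [z])" using sC by (rule successively_mono) (simp add: symE)
        then have sc1: "successively E (z # rev C)" using successively_rev[of E "C @ [z]"] by simp
        have "successively E c" unfolding c_def using succ_join[of E "x#A" z "rev C"] sc0 sc1 by simp
        moreover have "set c \<subseteq> V" using Cons.prems q pA qC unfolding c_def is_path_def by auto
        moreover have "E (last c) (hd c)"
        proof (cases "C = []")
          case True
          then have "hd q' = z" using qC by simp
          moreover have "E x (hd q')" using sq q'ne by (simp add: successively_Cons)
          ultimately show ?thesis unfolding c_def using True by (simp add: symE)
        next
          case False
          then have "last c = hd C" unfolding c_def by (simp add: last_rev)
          moreover have "E x (hd C)" using sq qC False by (simp add: successively_Cons)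
          ultimately show ?thesis unfolding c_def by (simp add: symE)
        qed
        ultimately have "is_cycle V E c" using len dc unfolding is_cycle_def is_path_alt
          by (auto simp: c_def)
        then show ?thesis using nc by blast
      qed
    qed
  qed
qed


lemma walk_to_path:
  "w \<noteq> [] \<Longrightarrow> set w \<subseteq> V \<Longrightarrow> successively E w \<Longrightarrow>
   \<exists>p. is_path V E p \<and> hd p = hd w \<and> last p = last w \<and> length p \<le> length w"
proof (induction "length w" arbitrary: w rule: less_induct)
  case less
  show ?case
  proof (cases "distinct w")
    case True
    then show ?thesis using less.prems unfolding is_path_alt by auto
  next
    case False
    then obtain xs y ys zs where w: "w = xs @ [y] @ ys @ [y] @ zs"
      using not_distinct_decomp by blast
    define w' where "w' = xs @ y # zs"
    have "successively E ((xs @ [y]) @ (ys @ [y] @ zs))" using less.prems(3) w by simp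
    then have s1: "successively E (xs @ [y])" by (subst (asm) successively_append_iff) blast
    have "successively E ((xs @ [y] @ ys) @ (y # zs))" using less.prems(3) w by simp
    then have s2: "successively E (y # zs)" by (subst (asm) successively_append_iff) blast
    have sw': "successively E w'" unfolding w'_def using succ_join[OF s1 s2] .
    have "length w' < length w" unfolding w'_def w by simp
    moreover have "w' \<noteq> []" "set w' \<subseteq> set w" unfolding w'_def w by auto
    ultimately obtain p where p: "is_path V E p" "hd p = hd w'" "last p = last w'" "length p \<le> length w'"
      using less.hyps less.prems(2) sw' by (metis order_trans)
    have "hd w' = hd w" unfolding w'_def w by (cases xs) auto
    moreover have "last w' = last w" unfolding w'_def w by (cases zs) auto
    ultimately show ?thesis using p \<open>length w' < length w\<close> by auto
  qed
qed

locale tr =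
  fixes V :: "'a set" and E :: "'a \<Rightarrow> 'a \<Rightarrow> bool"
  assumes tree: "is_tree V E"
begin

lemma sg: "simple_graph V E" using tree unfolding is_tree_def by blast
lemma nc: "\<nexists>c. is_cycle V E c" using tree unfolding is_tree_def by blast
lemma finV: "finite V" using sg unfolding simple_graph_def by blast
lemma symE: "E x y \<Longrightarrow> E y x" using sg unfolding simple_graph_def by blast
lemma EV: "E x y \<Longrightarrow> x \<in> V \<and> y \<in> V" using sg unfolding simple_graph_def by blast
lemma irr: "\<not> E x x" using sg unfolding simple_graph_def by blast

lemma ex_path: "x \<in> V \<Longrightarrow> y \<in> V \<Longrightarrow> \<exists>p. is_path V E p \<and> hd p = x \<and> last p = y"
  using tree unfolding is_tree_def connected_graph_def by blast

definition D where "D x y = length (SOME p. is_path V E p \<and> hd p = x \<and> last p = y)"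

lemma uniq: "is_path V E p \<Longrightarrow> is_path V E q \<Longrightarrow> hd p = hd q \<Longrightarrow> last p = last q \<Longrightarrow> p = q"
  using unique_path[OF sg nc] by blast

lemma D_eq: "is_path V E p \<Longrightarrow> D (hd p) (last p) = length p"
proof -
  assume p: "is_path V E p"
  let ?q = "SOME q. is_path V E q \<and> hd q = hd p \<and> last q = last p"
  have "is_path V E ?q \<and> hd ?q = hd p \<and> last ?q = last p"
    by (rule someI[of _ p]) (use p in auto)
  then have "?q = p" using uniq p by blast
  then show ?thesis unfolding D_def by simp
qed

lemma path_in: "is_path V E p \<Longrightarrow> hd p \<in> V \<and> last p \<in> V"
  unfolding is_path_def by auto

lemma D_path: "x \<in> V \<Longrightarrow> y \<in> V \<Longrightarrow> \<exists>p. is_path V E p \<and> hd p = x \<and> last p = y \<and> length p = D x y"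
proof -
  assume "x \<in> V" "y \<in> V"
  then obtain p where p: "is_path V E p" "hd p = x" "last p = y" using ex_path by blast
  then have "D x y = length p" using D_eq[OF p(1)] by simp
  then show ?thesis using p by (intro exI[of _ p]) simp
qed

lemma D_sym: "x \<in> V \<Longrightarrow> y \<in> V \<Longrightarrow> D x y = D y x"
proof -
  assume "x \<in> V" "y \<in> V"
  then obtain p where p: "is_path V E p" "hd p = x" "last p = y" "length p = D x y" using D_path by blast
  have "is_path V E (rev p)" using path_rev[OF sg p(1)] .
  then have "D (hd (rev p)) (last (rev p)) = length (rev p)" by (rule D_eq)
  moreover have "p \<noteq> []" using p(1) by (simp add: is_path_def)
  ultimately show ?thesis using p by (simp add: hd_rev last_rev)
qed

lemma D_refl: "x \<in> V \<Longrightarrow> D x x = 1"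
  using D_eq[OF path_single[of x V E]] by simp

lemma D_ge1: "x \<in> V \<Longrightarrow> y \<in> V \<Longrightarrow> D x y \<ge> 1"
proof -
  assume "x \<in> V" "y \<in> V"
  then obtain p where "is_path V E p" "length p = D x y" using D_path by blast
  then show ?thesis by (cases p) (auto simp: is_path_def)
qed

lemma D_one: "x \<in> V \<Longrightarrow> y \<in> V \<Longrightarrow> D x y = 1 \<Longrightarrow> x = y"
proof -
  assume "x \<in> V" "y \<in> V" "D x y = 1"
  then obtain p where p: "is_path V E p" "hd p = x" "last p = y" "length p = 1" using D_path by metis
  then show ?thesis by (cases p) auto
qed

lemma D_edge: "E x y \<Longrightarrow> D x y = 2"
proof -
  assume "E x y"
  then have "D (hd [x,y]) (last [x,y]) = length [x,y]" by (rule D_eq[OF path_edge[OF sg]])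
  then show ?thesis by simp
qed

lemma D_tri: "x \<in> V \<Longrightarrow> y \<in> V \<Longrightarrow> z \<in> V \<Longrightarrow> D x z + 1 \<le> D x y + D y z"
proof -
  assume V: "x \<in> V" "y \<in> V" "z \<in> V"
  obtain p where p: "is_path V E p" "hd p = x" "last p = y" "length p = D x y" using D_path V by blast
  obtain q where q: "is_path V E q" "hd q = y" "last q = z" "length q = D y z" using D_path V by blast
  have pne: "p \<noteq> []" and qne: "q \<noteq> []" using p q by (auto simp: is_path_def)
  then obtain q' where q': "q = y # q'" using q by (cases q) auto
  obtain p0 where p0: "p = p0 @ [y]" using pne p(3) by (metis append_butlast_last_id)
  define w where "w = p0 @ y # q'"
  have sw: "successively E w" unfolding w_def
    by (rule succ_join) (use p q q' p0 in \<open>auto simp: is_path_alt\<close>)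
  have "w \<noteq> []" "set w \<subseteq> V" using p0 p q q' unfolding w_def is_path_def by auto
  then obtain r where r: "is_path V E r" "hd r = hd w" "last r = last w" "length r \<le> length w"
    using walk_to_path sw by blast
  have "hd w = x" using p p0 unfolding w_def by (cases p0) auto
  moreover have "last w = z" using q q' unfolding w_def by (cases q') auto
  ultimately have "D x z = length r" using D_eq[OF r(1)] r by simp
  also have "\<dots> \<le> length p + length q'" using r(4) p0 unfolding w_def by simp
  finally show ?thesis using p q q' by simp
qed

lemma tau_eq: "v \<in> V \<Longrightarrow> tau V E v = Max ((\<lambda>w. D v w) ` V)"
proof -
  assume v: "v \<in> V"
  have "{length p | p. is_path V E p \<and> (hd p = v \<or> last p = v)} = (\<lambda>w. D v w) ` V"
  proof (intro equalityI subsetI)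
    fix n assume "n \<in> {length p | p. is_path V E p \<and> (hd p = v \<or> last p = v)}"
    then obtain p where p: "n = length p" "is_path V E p" "hd p = v \<or> last p = v" by blast
    show "n \<in> (\<lambda>w. D v w) ` V"
    proof (cases "hd p = v")
      case True
      then show ?thesis using D_eq[OF p(2)] p path_in[OF p(2)] by force
    next
      case False
      then have "last p = v" using p by blast
      then have "D v (hd p) = n" using D_sym D_eq[OF p(2)] p path_in[OF p(2)] by simp
      then show ?thesis using path_in[OF p(2)] by force
    qed
  next
    fix n assume "n \<in> (\<lambda>w. D v w) ` V"
    then obtain w where "w \<in> V" "n = D v w" by blast
    then show "n \<in> {length p | p. is_path V E p \<and> (hd p = v \<or> last p = v)}"
      using D_path[OF v] by force
  qed
  then show ?thesis unfolding tau_def by simp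
qed

lemma D_P:
  assumes P: "is_path V E P" and ij: "i \<le> j" "j < length P"
  shows "D (P!i) (P!j) = j - i + 1"
proof -
  define q where "q = take (j - i + 1) (drop i P)"
  have q: "is_path V E q" unfolding q_def using ij by (intro path_take path_drop P) auto
  have len: "length q = j - i + 1" unfolding q_def using ij by auto
  have "hd q = P!i" unfolding q_def using ij by (simp add: hd_conv_nth)
  moreover have "last q = P!j" using ij len q unfolding q_def
    by (subst last_conv_nth) (auto simp: is_path_def)
  ultimately show ?thesis using D_eq[OF q] len by simp
qed

lemma D_P':
  assumes P: "is_path V E P" and ij: "i < length P" "j < length P"
  shows "D (P!i) (P!j) = (if i \<le> j then j - i else i - j) + 1"
proof (cases "i \<le> j")
  case True then show ?thesis using D_P[OF P True ij(2)] by simp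
next
  case False
  have "P!i \<in> V" "P!j \<in> V" using P ij unfolding is_path_def by auto
  then show ?thesis using D_P[OF P _ ij(1), of j] False D_sym by simp
qed

lemma lower:
  assumes P: "is_path V E P" and v: "v \<in> V" and j: "j < length P"
    and mn: "\<forall>i<length P. D v (P!j) \<le> D v (P!i)"
  shows "D v (last P) \<ge> D v (P!j) + (length P - 1 - j)"
proof (cases "j = length P - 1")
  case True
  then have "last P = P!j" using P by (simp add: last_conv_nth is_path_def)
  then show ?thesis using True by simp
next
  case False
  then have j1: "j + 1 < length P" using j by simp
  have Pj: "P!j \<in> V" using P j unfolding is_path_def by auto
  obtain R where R: "is_path V E R" "hd R = v" "last R = P!j" "length R = D v (P!j)"
    using D_path[OF v Pj] by blast
  define Q where "Q = drop (j+1) P"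
  have Q: "is_path V E Q" unfolding Q_def using path_drop[OF P j1] .
  have disj: "set R \<inter> set Q = {}"
  proof (rule ccontr)
    assume "set R \<inter> set Q \<noteq> {}"
    then obtain y where yR: "y \<in> set R" and yQ: "y \<in> set Q" by blast
    from yQ obtain t where t: "t < length Q" "y = Q!t" by (metis in_set_conv_nth)
    define i where "i = j + 1 + t"
    have i: "i < length P" "y = P!i" using t j1 unfolding Q_def i_def by auto
    have dP: "distinct P" using P by (simp add: is_path_def)
    have yne: "y \<noteq> P!j" using i dP j unfolding i_def by (simp add: nth_eq_iff_index_eq)
    from yR obtain R1 R2 where R12: "R = R1 @ y # R2" by (meson split_list)
    have "R2 \<noteq> []" using R12 R(3) yne by auto
    define R' where "R' = take (length R1 + 1) R"
    have R'eq: "R' = R1 @ [y]" unfolding R'_def R12 by simp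
    have R': "is_path V E R'" unfolding R'_def by (rule path_take[OF R(1)]) simp
    have "hd R' = v" using R(2) R12 R'eq by (cases R1) auto
    moreover have "last R' = y" using R'eq by simp
    ultimately have "D v y = length R1 + 1" using D_eq[OF R'] R'eq by simp
    also have "\<dots> < length R" using R12 \<open>R2 \<noteq> []\<close> by simp
    also have "\<dots> = D v (P!j)" using R(4) .
    also have "\<dots> \<le> D v (P!i)" using mn i by simp
    finally show False using i by simp
  qed
  have "hd Q = P!(j+1)" unfolding Q_def using j1 by (simp add: hd_drop_conv_nth)
  moreover have "E (P!j) (P!(j+1))" using P j1 unfolding is_path_def by auto
  ultimately have RQ: "is_path V E (R @ Q)" using path_append[OF R(1) Q disj] R(3) by simp
  have Qne: "Q \<noteq> []" unfolding Q_def using j1 by simp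
  have "hd (R @ Q) = v" using R by (cases R) (auto simp: is_path_def)
  moreover have "last (R @ Q) = last P" using Qne unfolding Q_def by simp
  ultimately have "D v (last P) = length R + length Q" using D_eq[OF RQ] by simp
  then show ?thesis using R(4) unfolding Q_def by simp
qed

lemma D_le_longest:
  assumes LP: "\<forall>p. is_path V E p \<longrightarrow> length p \<le> m" and "x \<in> V" "y \<in> V"
  shows "D x y \<le> m"
  using D_path[OF assms(2,3)] LP by auto

lemma ex_min_idx:
  assumes "w \<in> V" "(0::nat) < m"
  shows "\<exists>j<m. \<forall>i<m. D w (P!j) \<le> D w (P!i)"
  using ex_has_least_nat[of "\<lambda>i. i < m" 0 "\<lambda>i. D w (P!i)"] assms by auto

lemma formula:
  assumes P: "is_path V E P" and LP: "\<forall>p. is_path V E p \<longrightarrow> length p \<le> length P"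
    and v: "v \<in> V" and j: "j < length P"
    and mn: "\<forall>i<length P. D v (P!j) \<le> D v (P!i)"
  shows "tau V E v = D v (P!j) + max j (length P - 1 - j)"
proof -
  define m where "m = length P"
  define r where "r = D v (P!j)"
  have m0: "0 < m" using P unfolding m_def is_path_def by auto
  have PV: "\<And>i. i < m \<Longrightarrow> P!i \<in> V" using P unfolding m_def is_path_def by auto
  have lastP: "last P = P!(m-1)" and hdP: "hd P = P!0"
    using P unfolding m_def is_path_def by (auto simp: last_conv_nth hd_conv_nth)
  have low: "\<And>w jw. w \<in> V \<Longrightarrow> jw < m \<Longrightarrow> (\<forall>i<m. D w (P!jw) \<le> D w (P!i)) \<Longrightarrow>
       D w (P!(m-1)) \<ge> D w (P!jw) + (m - 1 - jw) \<and> D w (P!0) \<ge> D w (P!jw) + jw"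
  proof -
    fix w jw assume w: "w \<in> V" and jw: "jw < m" and mw: "\<forall>i<m. D w (P!jw) \<le> D w (P!i)"
    have 1: "D w (P!(m-1)) \<ge> D w (P!jw) + (m - 1 - jw)"
      using lower[OF P w] jw mw lastP unfolding m_def by simp
    have rP: "is_path V E (rev P)" using path_rev[OF sg P] .
    have rn: "\<And>i. i < m \<Longrightarrow> rev P ! i = P!(m - 1 - i)" unfolding m_def by (simp add: rev_nth)
    have mn': "\<forall>i<length (rev P). D w (rev P ! (m-1-jw)) \<le> D w (rev P ! i)"
      using mw rn jw unfolding m_def by auto
    have "D w (last (rev P)) \<ge> D w (rev P ! (m-1-jw)) + (length (rev P) - 1 - (m-1-jw))"
      by (rule lower[OF rP w _ mn']) (use jw in \<open>auto simp: m_def\<close>)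
    moreover have "last (rev P) = P!0" using hdP P by (simp add: last_rev)
    moreover have "rev P ! (m-1-jw) = P!jw" using rn jw by simp
    ultimately have 2: "D w (P!0) \<ge> D w (P!jw) + jw" using jw unfolding m_def by simp
    show "D w (P!(m-1)) \<ge> D w (P!jw) + (m - 1 - jw) \<and> D w (P!0) \<ge> D w (P!jw) + jw"
      using 1 2 by simp
  qed
  have Dle: "\<And>x y. x \<in> V \<Longrightarrow> y \<in> V \<Longrightarrow> D x y \<le> m"
    using D_le_longest LP unfolding m_def by blast
  have lowv: "D v (P!(m-1)) \<ge> r + (m - 1 - j)" "D v (P!0) \<ge> r + j"
    using low[OF v] j mn unfolding m_def r_def by auto
  have up: "D v w \<le> r + max j (m - 1 - j)" if w: "w \<in> V" for w
  proof -
    obtain jw where jw: "jw < m" and mw: "\<forall>i<m. D w (P!jw) \<le> D w (P!i)"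
      using ex_min_idx[OF w m0] by blast
    define rw where "rw = D w (P!jw)"
    have lw: "D w (P!(m-1)) \<ge> rw + (m - 1 - jw)" "D w (P!0) \<ge> rw + jw"
      using low[OF w jw mw] unfolding rw_def by auto
    have "D w (P!(m-1)) \<le> m" "D w (P!0) \<le> m" using Dle w PV m0 by auto
    with lw have c1: "rw + (m - 1 - jw) \<le> m" "rw + jw \<le> m" by auto
    have t1: "D v w + 1 \<le> D v (P!jw) + D (P!jw) w" using D_tri[OF v PV[OF jw] w] .
    have t2: "D v (P!jw) + 1 \<le> r + D (P!j) (P!jw)" using D_tri[OF v PV[of j] PV[OF jw]] j
      unfolding r_def m_def by simp
    have t3: "D (P!j) (P!jw) = (if j \<le> jw then jw - j else j - jw) + 1"
      using D_P'[OF P] j jw unfolding m_def by simp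
    have t4: "D (P!jw) w = rw" unfolding rw_def using D_sym[OF w PV[OF jw]] by simp
    have "rw \<ge> 1" using D_ge1[OF w PV[OF jw]] unfolding rw_def .
    show ?thesis using t1 t2 t3 t4 c1 jw j \<open>rw \<ge> 1\<close> unfolding m_def by (auto split: if_splits)
  qed
  have "Max ((\<lambda>w. D v w) ` V) = r + max j (m - 1 - j)"
  proof (rule Max_eqI)
    show "finite ((\<lambda>w. D v w) ` V)" using finV by simp
    show "y \<le> r + max j (m - 1 - j)" if "y \<in> (\<lambda>w. D v w) ` V" for y using up that by blast
    show "r + max j (m - 1 - j) \<in> (\<lambda>w. D v w) ` V"
    proof (cases "j \<le> m - 1 - j")
      case True
      then have "D v (P!(m-1)) = r + max j (m - 1 - j)" using lowv up[OF PV[of "m-1"]] m0 by simp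
      then show ?thesis using PV[of "m-1"] m0 by (metis diff_less imageI less_one)
    next
      case False
      then have "D v (P!0) = r + max j (m - 1 - j)" using lowv up[OF PV[of 0]] m0 by simp
      then show ?thesis using PV[of 0] m0 by (metis imageI)
    qed
  qed
  then show ?thesis using tau_eq[OF v] unfolding r_def m_def by simp
qed

lemma tau_le:
  assumes LP: "\<forall>p. is_path V E p \<longrightarrow> length p \<le> m" and v: "v \<in> V"
  shows "tau V E v \<le> m"
proof -
  have "Max ((\<lambda>w. D v w) ` V) \<le> m"
    using finV v D_le_longest[OF LP v] by (subst Max_le_iff) auto
  then show ?thesis using tau_eq[OF v] by simp
qed

lemma longest_exists: "\<exists>P. is_path V E P \<and> (\<forall>p. is_path V E p \<longrightarrow> length p \<le> length P)"
proof -
  define S where "S = {length p | p. is_path V E p}"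
  have "S \<subseteq> {..card V}"
  proof
    fix n assume "n \<in> S"
    then obtain p where "n = length p" "is_path V E p" unfolding S_def by blast
    then have "n = card (set p)" "set p \<subseteq> V" by (auto simp: is_path_def distinct_card)
    then show "n \<in> {..card V}" using card_mono[OF finV] by auto
  qed
  then have fS: "finite S" by (rule finite_subset) simp
  obtain x where "x \<in> V" using tree unfolding is_tree_def by blast
  then have "1 \<in> S" unfolding S_def using path_single[of x V E] by force
  then have "Max S \<in> S" using fS by (intro Max_in) auto
  then obtain P where P: "is_path V E P" "length P = Max S" unfolding S_def by auto
  have "\<forall>p. is_path V E p \<longrightarrow> length p \<le> length P"
    using P fS unfolding S_def by (auto intro: Max_ge)
  then show ?thesis using P by blast
qed

lemma tau_on_P:
  assumes P: "is_path V E P" and LP: "\<forall>p. is_path V E p \<longrightarrow> length p \<le> length P"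
    and i: "i < length P"
  shows "tau V E (P!i) = 1 + max i (length P - 1 - i)"
proof -
  have PV: "\<And>i. i < length P \<Longrightarrow> P!i \<in> V" using P unfolding is_path_def by auto
  have "\<forall>k<length P. D (P!i) (P!i) \<le> D (P!i) (P!k)"
    using D_refl[OF PV[OF i]] D_ge1 PV i by simp
  then show ?thesis using formula[OF P LP PV[OF i] i] D_refl[OF PV[OF i]] by simp
qed

end

definition aa :: "nat \<Rightarrow> nat" where "aa m = (m + 2) div 2"
definition kk :: "nat \<Rightarrow> nat" where "kk m = (if odd m then 1 else 2)"
definition catl :: "nat \<Rightarrow> nat \<Rightarrow> (nat \<Rightarrow> nat) \<Rightarrow> nat \<Rightarrow> nat list" where
  "catl k a c l = replicate k a @ concat (map (\<lambda>j. replicate (c j) (a + 1 + j)) [0..<l])"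
definition pat :: "nat \<Rightarrow> nat list \<Rightarrow> nat list" where
  "pat m ks = catl (kk m) (aa m) (\<lambda>j. ks ! j) (m - aa m)"

lemma catl_Suc: "catl k a c (Suc l) = catl k a c l @ replicate (c l) (a + 1 + l)"
  unfolding catl_def by simp

lemma catl_count:
  "count (mset (catl k a c l)) t = (if t = a then k else if a < t \<and> t \<le> a + l then c (t - a - 1) else 0)"
  by (induction l) (auto simp: catl_Suc catl_def)

lemma catl_set: "set (catl k a c l) \<subseteq> {a..a+l}"
  by (induction l) (auto simp: catl_Suc catl_def)

lemma catl_sorted: "sorted (catl k a c l)"
proof (induction l)
  case 0 then show ?case by (simp add: catl_def)
next
  case (Suc l)
  then show ?case using catl_set[of k a c l] by (auto simp: catl_Suc sorted_append)
qed

lemma count_image_mset_set: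
  "finite A \<Longrightarrow> count (image_mset f (mset_set A)) t = card {v\<in>A. f v = t}"
  by (simp add: count_image_mset' Collect_conj_eq Int_commute eq_commute)

lemma detour_eqI:
  assumes "finite V" "\<And>t. card {v\<in>V. tau V E v = t} = count (mset xs) t" "sorted xs"
  shows "detour_seq V E = xs"
proof -
  have "image_mset (tau V E) (mset_set V) = mset xs"
    using assms(1,2) by (simp add: multiset_eq_iff count_image_mset_set)
  then show ?thesis unfolding detour_seq_def using assms(3) by (simp add: sorted_sort_id)
qed

lemma idx_set:
  assumes "m \<ge> 1"
  shows "{i. i < m \<and> 1 + max i (m - 1 - i) = aa m} = (if odd m then {(m - 1) div 2} else {m div 2 - 1, m div 2})"
proof (cases "odd m")
  case True
  then obtain q where q: "m = 2*q+1" by (metis oddE)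
  then have "aa m = q + 1" unfolding aa_def by simp
  then show ?thesis using q True by auto
next
  case False
  then obtain q where q: "m = 2*q" by (metis evenE)
  then have q1: "q \<ge> 1" using assms by simp
  have "aa m = q + 1" unfolding aa_def q by simp
  then show ?thesis using q q1 False by auto
qed

context tr begin

lemma necessity:
  "\<exists>m ks. m \<ge> 1 \<and> length ks = m - aa m \<and> (\<forall>j<length ks. ks!j \<ge> 2) \<and> detour_seq V E = pat m ks"
proof -
  obtain P where P: "is_path V E P" and LP: "\<forall>p. is_path V E p \<longrightarrow> length p \<le> length P"
    using longest_exists by blast
  define m where "m = length P"
  have m1: "m \<ge> 1" using P unfolding m_def is_path_def by (cases P) auto
  have PV: "\<And>i. i < m \<Longrightarrow> P!i \<in> V" using P unfolding m_def is_path_def by auto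
  have dP: "distinct P" using P by (simp add: is_path_def)
  have tP: "\<And>i. i < m \<Longrightarrow> tau V E (P!i) = 1 + max i (m - 1 - i)"
    using tau_on_P[OF P LP] unfolding m_def by blast
  have gen: "\<exists>j r. j < m \<and> r \<ge> 1 \<and> tau V E v = r + max j (m - 1 - j) \<and> (r = 1 \<longrightarrow> v = P!j)"
    if v: "v \<in> V" for v
  proof -
    obtain j where j: "j < m" and mn: "\<forall>i<m. D v (P!j) \<le> D v (P!i)"
      using ex_min_idx[OF v, of m P] m1 by auto
    have "tau V E v = D v (P!j) + max j (m - 1 - j)"
      using formula[OF P LP v] j mn unfolding m_def by blast
    moreover have "D v (P!j) \<ge> 1" using D_ge1[OF v PV[OF j]] .
    moreover have "D v (P!j) = 1 \<longrightarrow> v = P!j" using D_one[OF v PV[OF j]] by blast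
    ultimately show ?thesis using j by blast
  qed
  have F1: "aa m \<le> tau V E v \<and> tau V E v \<le> m" if v: "v \<in> V" for v
  proof -
    obtain j r where jr: "j < m" "r \<ge> 1" "tau V E v = r + max j (m - 1 - j)" using gen[OF v] by blast
    have "aa m \<le> 1 + max j (m - 1 - j)" unfolding aa_def using jr(1) by (simp add: max_def; arith)
    then have "aa m \<le> tau V E v" using jr by simp
    moreover have "tau V E v \<le> m" using tau_le[OF _ v, of m] LP unfolding m_def by blast
    ultimately show ?thesis by simp
  qed
  have F2: "{v\<in>V. tau V E v = aa m} = (\<lambda>i. P!i) ` {i. i < m \<and> 1 + max i (m - 1 - i) = aa m}"
  proof (intro equalityI subsetI)
    fix v assume "v \<in> {v\<in>V. tau V E v = aa m}"
    then have v: "v \<in> V" "tau V E v = aa m" by auto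
    obtain j r where jr: "j < m" "r \<ge> 1" "tau V E v = r + max j (m - 1 - j)" "r = 1 \<longrightarrow> v = P!j"
      using gen[OF v(1)] by blast
    have "aa m \<le> 1 + max j (m - 1 - j)" unfolding aa_def using jr(1) by (simp add: max_def; arith)
    then have "r = 1" using jr v by simp
    then show "v \<in> (\<lambda>i. P!i) ` {i. i < m \<and> 1 + max i (m - 1 - i) = aa m}"
      using jr v by auto
  next
    fix v assume "v \<in> (\<lambda>i. P!i) ` {i. i < m \<and> 1 + max i (m - 1 - i) = aa m}"
    then obtain i where "i < m" "1 + max i (m - 1 - i) = aa m" "v = P!i" by blast
    then show "v \<in> {v\<in>V. tau V E v = aa m}" using tP PV by auto
  qed
  have injP: "inj_on (\<lambda>i. P!i) {i. i < m \<and> 1 + max i (m - 1 - i) = aa m}"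
    using dP unfolding m_def by (auto simp: inj_on_def nth_eq_iff_index_eq)
  have cardA: "card {v\<in>V. tau V E v = aa m} = kk m"
  proof -
    have "card {v\<in>V. tau V E v = aa m} = card {i. i < m \<and> 1 + max i (m - 1 - i) = aa m}"
      unfolding F2 by (rule card_image[OF injP])
    also have "\<dots> = kk m" unfolding idx_set[OF m1] kk_def using m1 by auto
    finally show ?thesis .
  qed
  have F3: "card {v\<in>V. tau V E v = t} \<ge> 2" if t: "aa m < t" "t \<le> m" for t
  proof -
    have ne: "t - 1 \<noteq> m - t" using t unfolding aa_def by arith
    have "tau V E (P!(t-1)) = t" using tP[of "t-1"] t unfolding aa_def by (simp add: max_def; arith)
    moreover have "tau V E (P!(m-t)) = t" using tP[of "m-t"] t unfolding aa_def by (simp add: max_def; arith)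
    moreover have "P!(t-1) \<noteq> P!(m-t)" using ne dP t unfolding m_def aa_def by (simp add: nth_eq_iff_index_eq)
    ultimately have "{P!(t-1), P!(m-t)} \<subseteq> {v\<in>V. tau V E v = t}" "card {P!(t-1), P!(m-t)} = 2"
      using PV t unfolding aa_def by auto
    then show ?thesis using card_mono[of "{v\<in>V. tau V E v = t}"] finV by (metis (no_types, lifting) finite_subset mem_Collect_eq subsetI)
  qed
  define ks where "ks = map (\<lambda>j. card {v\<in>V. tau V E v = aa m + 1 + j}) [0..<m - aa m]"
  have am: "aa m \<le> m" unfolding aa_def using m1 by arith
  have "detour_seq V E = pat m ks"
  proof (rule detour_eqI[OF finV])
    show "sorted (pat m ks)" unfolding pat_def by (rule catl_sorted)
    fix t
    show "card {v\<in>V. tau V E v = t} = count (mset (pat m ks)) t"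
    proof -
      consider "t = aa m" | "aa m < t \<and> t \<le> m" | "\<not> (aa m \<le> t \<and> t \<le> m)" by linarith
      then show ?thesis
      proof cases
        case 1 then show ?thesis using cardA unfolding pat_def catl_count by simp
      next
        case 2
        then have "ks ! (t - aa m - 1) = card {v\<in>V. tau V E v = t}" unfolding ks_def by auto
        then show ?thesis using 2 am unfolding pat_def catl_count by auto
      next
        case 3
        then have "{v\<in>V. tau V E v = t} = {}" using F1 by auto
        then show ?thesis using 3 am unfolding pat_def catl_count by (simp only: card.empty) auto
      qed
    qed
  qed
  moreover have "\<forall>j<length ks. ks!j \<ge> 2" unfolding ks_def using F3 am by auto
  moreover have "length ks = m - aa m" unfolding ks_def by simp
  ultimately show ?thesis using m1 by blast
qed

end


lemma add_leaf:
  assumes T: "is_tree V E" and x: "x \<notin> V" and u: "u \<in> V"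
    and E': "E' = (\<lambda>a b. E a b \<or> (a = x \<and> b = u) \<or> (a = u \<and> b = x))"
  shows "is_tree (insert x V) E'"
proof -
  interpret tr V E by (rule tr.intro[OF T])
  have xu: "x \<noteq> u" using x u by blast
  have sg': "simple_graph (insert x V) E'"
    using sg xu u unfolding simple_graph_def E' by blast
  have nbx: "\<And>y. E' x y \<Longrightarrow> y = u" "\<And>y. E' y x \<Longrightarrow> y = u"
    unfolding E' using EV x by auto
  have lift: "is_path (insert x V) E' p" if "is_path V E p" for p
    using that unfolding is_path_def E' by auto
  have fromx: "\<exists>p. is_path (insert x V) E' p \<and> hd p = x \<and> last p = b" if b: "b \<in> insert x V" for b
  proof (cases "b = x")
    case True then show ?thesis using path_single[of x "insert x V" E'] by auto
  next
    case False
    then have "b \<in> V" using b by blast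
    then obtain p where p: "is_path V E p" "hd p = u" "last p = b" using ex_path u by blast
    have "is_path (insert x V) E' ([x] @ p)"
    proof (rule path_append)
      show "is_path (insert x V) E' [x]" by (rule path_single) simp
      show "is_path (insert x V) E' p" using lift p(1) .
      show "set [x] \<inter> set p = {}" using p(1) x unfolding is_path_def by auto
      show "E' (last [x]) (hd p)" using p(2) unfolding E' by simp
    qed
    moreover have "last ([x] @ p) = b" using p by (auto simp: is_path_def)
    ultimately show ?thesis by (intro exI[of _ "[x] @ p"]) simp
  qed
  have conn: "connected_graph (insert x V) E'"
    unfolding connected_graph_def
  proof (intro ballI)
    fix a b assume a: "a \<in> insert x V" and b: "b \<in> insert x V"
    show "\<exists>p. is_path (insert x V) E' p \<and> hd p = a \<and> last p = b"
    proof (cases "a = x")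
      case True then show ?thesis using fromx[OF b] by simp
    next
      case ax: False
      show ?thesis
      proof (cases "b = x")
        case True
        obtain p where p: "is_path (insert x V) E' p" "hd p = x" "last p = a" using fromx[OF a] by blast
        have "is_path (insert x V) E' (rev p)" using path_rev[OF sg' p(1)] .
        moreover have "p \<noteq> []" using p(1) by (simp add: is_path_def)
        ultimately show ?thesis using p True by (intro exI[of _ "rev p"]) (simp add: hd_rev last_rev)
      next
        case False
        then have "a \<in> V" "b \<in> V" using a b ax by auto
        then show ?thesis using ex_path lift by blast
      qed
    qed
  qed
  have nc': "\<nexists>c. is_cycle (insert x V) E' c"
  proof
    assume "\<exists>c. is_cycle (insert x V) E' c"
    then obtain c where c: "is_cycle (insert x V) E' c" by blast
    have len: "length c \<ge> 3" and pc: "is_path (insert x V) E' c" and cl: "E' (last c) (hd c)"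
      using c unfolding is_cycle_def by auto
    have dc: "distinct c" using pc unfolding is_path_def by auto
    have ed: "\<And>i. Suc i < length c \<Longrightarrow> E' (c!i) (c!Suc i)" using pc unfolding is_path_def by auto
    have cne: "c \<noteq> []" using len by auto
    have hdc: "hd c = c!0" and lastc: "last c = c!(length c - 1)"
      by (simp_all add: hd_conv_nth[OF cne] last_conv_nth[OF cne])
    show False
    proof (cases "x \<in> set c")
      case False
      have "is_cycle V E c"
        unfolding is_cycle_def is_path_def
      proof (intro conjI allI impI)
        show "length c \<ge> 3" "c \<noteq> []" "distinct c" using len dc by auto
        show "set c \<subseteq> V" using pc False unfolding is_path_def by auto
        fix i assume i: "Suc i < length c"
        have "c!i \<noteq> x" "c!Suc i \<noteq> x" using False i nth_mem by (metis Suc_lessD)+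
        then show "E (c!i) (c!Suc i)" using ed[OF i] unfolding E' by auto
      next
        have "last c \<noteq> x" "hd c \<noteq> x" using False cne last_in_set hd_in_set by metis+
        then show "E (last c) (hd c)" using cl unfolding E' by auto
      qed
      then show False using nc by blast
    next
      case True
      then obtain i where i: "i < length c" "c!i = x" by (metis in_set_conv_nth)
      let ?n = "length c"
      have neq: "\<And>a b. a < ?n \<Longrightarrow> b < ?n \<Longrightarrow> a \<noteq> b \<Longrightarrow> c!a \<noteq> c!b"
        using dc by (simp add: nth_eq_iff_index_eq)
      consider "i = 0" | "i = ?n - 1" | "0 < i \<and> i < ?n - 1" using i by linarith
      then show False
      proof cases
        case 1
        have "c!1 = u" using nbx(1) ed[of 0] i 1 len by auto
        moreover have "c!(?n - 1) = u" using nbx(2) cl i 1 hdc lastc by auto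
        moreover have "c!1 \<noteq> c!(?n - 1)" by (rule neq) (use len in auto)
        ultimately show False by simp
      next
        case 2
        have e: "E' (c!(?n-2)) (c!Suc (?n-2))" by (rule ed) (use len in simp)
        moreover have "Suc (?n-2) = i" using 2 len by simp
        ultimately have "c!(?n - 2) = u" using nbx(2) i by auto
        moreover have "c!0 = u" using nbx(1) cl i 2 hdc lastc by auto
        moreover have "c!(?n - 2) \<noteq> c!0" by (rule neq) (use len in auto)
        ultimately show False by simp
      next
        case 3
        have "c!(i - 1) = u" using nbx(2) ed[of "i - 1"] i 3 by auto
        moreover have "c!(Suc i) = u" using nbx(1) ed[of i] i 3 by auto
        moreover have "c!(i - 1) \<noteq> c!(Suc i)" by (rule neq) (use i 3 in auto)
        ultimately show False by simp
      qed
    qed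
  qed
  show ?thesis unfolding is_tree_def using sg' conn nc' by blast
qed


definition pgE :: "(nat \<Rightarrow> nat) \<Rightarrow> nat \<Rightarrow> nat \<Rightarrow> nat \<Rightarrow> bool" where
  "pgE par N x y \<longleftrightarrow> x < N \<and> y < N \<and> ((0 < y \<and> x = par y) \<or> (0 < x \<and> y = par x))"

lemma pg_tree:
  assumes par: "\<forall>n. 0 < n \<longrightarrow> par n < n"
  shows "0 < N \<Longrightarrow> is_tree {0..<N} (pgE par N)"
proof (induction N)
  case 0 then show ?case by simp
next
  case (Suc N)
  show ?case
  proof (cases "N = 0")
    case True
    have noE: "\<not> pgE par (Suc N) x y" for x y unfolding pgE_def True by auto
    have sg: "simple_graph {0..<Suc N} (pgE par (Suc N))"
      unfolding simple_graph_def using noE by auto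
    have conn: "connected_graph {0..<Suc N} (pgE par (Suc N))"
      unfolding connected_graph_def using True path_single[of 0 "{0..<Suc N}" "pgE par (Suc N)"]
      by (intro ballI) (force)
    have nc: "\<nexists>c. is_cycle {0..<Suc N} (pgE par (Suc N)) c"
    proof
      assume "\<exists>c. is_cycle {0..<Suc N} (pgE par (Suc N)) c"
      then obtain c where c: "length c \<ge> 3" "distinct c" "set c \<subseteq> {0..<Suc N}"
        unfolding is_cycle_def is_path_def by blast
      have "length c = card (set c)" using c(2) by (simp add: distinct_card)
      also have "\<dots> \<le> card {0..<Suc N}" using c(3) by (intro card_mono) auto
      finally show False using c(1) True by simp
    qed
    show ?thesis unfolding is_tree_def using sg conn nc by auto
  next
    case False
    have T: "is_tree {0..<N} (pgE par N)" using Suc.IH False by simp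
    have pN: "par N < N" using par False by simp
    have eq: "pgE par (Suc N) = (\<lambda>a b. pgE par N a b \<or> (a = N \<and> b = par N) \<or> (a = par N \<and> b = N))"
    proof -
      have parl: "\<And>n. 0 < n \<Longrightarrow> par n < n" using par by blast
      show ?thesis using pN False unfolding pgE_def by (intro ext) (auto simp: less_Suc_eq dest: parl)
    qed
    have "is_tree (insert N {0..<N}) (pgE par (Suc N))"
      by (rule add_leaf[OF T _ _ eq]) (use pN in auto)
    moreover have "insert N {0..<N} = {0..<Suc N}" by auto
    ultimately show ?thesis by simp
  qed
qed


lemma aa_le: "v < m \<Longrightarrow> aa m \<le> 1 + max v (m - 1 - v)"
  unfolding aa_def by (simp add: max_def; arith)

lemma aa_bounds: "m + 1 \<le> 2 * aa m" "2 * aa m \<le> m + 2"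
  unfolding aa_def by arith+

lemma spine_count:
  assumes m1: "m \<ge> 1"
  shows "card {v. v < m \<and> 1 + max v (m - 1 - v) = t} =
    (if t = aa m then kk m else if aa m < t \<and> t \<le> m then 2 else 0)"
proof -
  consider "t = aa m" | "aa m < t \<and> t \<le> m" | "t \<noteq> aa m \<and> \<not> (aa m < t \<and> t \<le> m)" by blast
  then show ?thesis
  proof cases
    case 1
    have "card {v. v < m \<and> 1 + max v (m - 1 - v) = t} = card (if odd m then {(m - 1) div 2} else {m div 2 - 1, m div 2})"
      using idx_set[OF m1] 1 by simp
    also have "\<dots> = kk m" unfolding kk_def using m1 by auto
    finally show ?thesis using 1 by simp
  next
    case 2
    have h: "m + 3 \<le> 2 * t" "t \<le> m" using 2 aa_bounds[of m] by auto
    have "(v < m \<and> 1 + max v (m - 1 - v) = t) \<longleftrightarrow> (v = t - 1 \<or> v = m - t)" for v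
      unfolding max_def using h by auto
    then have "{v. v < m \<and> 1 + max v (m - 1 - v) = t} = {t - 1, m - t}" by auto
    moreover have "t - 1 \<noteq> m - t" using h by auto
    ultimately show ?thesis using 2 by auto
  next
    case 3
    have e: "{v. v < m \<and> 1 + max v (m - 1 - v) = t} = {}"
    proof (intro equalityI subsetI)
      fix v assume "v \<in> {v. v < m \<and> 1 + max v (m - 1 - v) = t}"
      then have v: "v < m" "1 + max v (m - 1 - v) = t" by auto
      have "aa m \<le> t" using aa_le[OF v(1)] v(2) by simp
      moreover have "t \<le> m" using v unfolding max_def by auto
      ultimately show "v \<in> {}" using 3 by auto
    qed auto
    show ?thesis unfolding e using 3 by simp
  qed
qed

lemma sufficiency:
  assumes m1: "m \<ge> 1" and lks: "length ks = m - aa m" and ks2: "\<forall>j<length ks. ks!j \<ge> 2"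
  shows "\<exists>(V :: nat set) E. is_tree V E \<and> detour_seq V E = pat m ks"
proof -
  define a where "a = aa m"
  define l where "l = m - a"
  define L where "L = concat (map (\<lambda>j. replicate (ks!j - 2) (a - 1 + j)) [0..<l])"
  define N where "N = m + length L"
  define par where "par = (\<lambda>n. if n < m then n - 1 else if n - m < length L then L!(n-m) else 0)"
  define V where "V = {0..<N}"
  define E where "E = pgE par N"
  have a1: "a \<ge> 1" "a \<le> m" "2 * a \<ge> m + 1" unfolding a_def aa_def using m1 by arith+
  have Lset: "1 \<le> p \<and> p + 2 \<le> m" if pL: "p \<in> set L" for p
  proof -
    obtain j where j: "j < l" "p = a - 1 + j" using pL unfolding L_def by auto
    then have "m \<ge> 3" unfolding l_def a_def aa_def by arith
    then have "a \<ge> 2" unfolding a_def aa_def by arith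
    then show ?thesis using j unfolding l_def by arith
  qed
  have parlt: "\<forall>n. 0 < n \<longrightarrow> par n < n"
  proof (intro allI impI)
    fix n :: nat assume n: "0 < n"
    show "par n < n"
    proof (cases "n < m")
      case True then show ?thesis using n unfolding par_def by simp
    next
      case False
      show ?thesis
      proof (cases "n - m < length L")
        case True
        then have "L!(n-m) \<in> set L" by simp
        then show ?thesis using Lset False True unfolding par_def by fastforce
      next
        case False2: False
        then show ?thesis using n False unfolding par_def by simp
      qed
    qed
  qed
  have N0: "0 < N" unfolding N_def using m1 by simp
  have T: "is_tree V E" unfolding V_def E_def by (rule pg_tree[OF parlt N0])
  interpret tr V E by (rule tr.intro[OF T])
  define P where "P = [0..<m]"
  have Pn: "\<And>i. i < m \<Longrightarrow> P!i = i" unfolding P_def by simp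
  have lenP: "length P = m" unfolding P_def by simp
  have P: "is_path V E P" unfolding is_path_def P_def
  proof (intro conjI allI impI)
    show "[0..<m] \<noteq> []" using m1 by simp
    show "distinct [0..<m]" by simp
    show "set [0..<m] \<subseteq> V" unfolding V_def N_def by auto
    fix i assume i: "Suc i < length [0..<m]"
    then show "E ([0..<m] ! i) ([0..<m] ! Suc i)" unfolding E_def pgE_def par_def N_def by simp
  qed
  define pos where "pos = (\<lambda>x. if x < m then x else L!(x-m))"
  define rx where "rx = (\<lambda>x::nat. if x < m then 1 else (2::nat))"
  have posm: "pos x < m" "rx x = 2 \<Longrightarrow> 1 \<le> pos x \<and> pos x + 2 \<le> m" if x: "x \<in> V" for x
  proof -
    show "pos x < m"
    proof (cases "x < m")
      case False
      then have "L!(x-m) \<in> set L" using x unfolding V_def N_def by simp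
      then show ?thesis using Lset False unfolding pos_def by fastforce
    qed (simp add: pos_def)
    show "rx x = 2 \<Longrightarrow> 1 \<le> pos x \<and> pos x + 2 \<le> m"
    proof -
      assume "rx x = 2"
      then have xm: "\<not> x < m" unfolding rx_def by (auto split: if_splits)
      then have "L!(x-m) \<in> set L" using x unfolding V_def N_def by simp
      then show ?thesis using Lset xm unfolding pos_def by simp
    qed
  qed
  have posV: "pos x \<in> V" if "x \<in> V" for x using posm[OF that] unfolding V_def N_def by simp
  have Dpos: "D x (pos x) = rx x" if x: "x \<in> V" for x
  proof (cases "x < m")
    case True then show ?thesis using D_refl[OF x] unfolding pos_def rx_def by simp
  next
    case False
    have "E x (pos x)" using x False posV[OF x] m1 unfolding E_def pgE_def V_def par_def pos_def N_def by auto
    then show ?thesis using D_edge False unfolding rx_def by simp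
  qed
  have rx12: "rx x = 1 \<or> rx x = 2" for x unfolding rx_def by simp
  have Dpp: "D (pos x) (pos y) = (if pos x \<le> pos y then pos y - pos x else pos x - pos y) + 1"
    if "x \<in> V" "y \<in> V" for x y
    using D_P'[OF P, of "pos x" "pos y"] posm[OF that(1)] posm[OF that(2)] Pn lenP by simp
  have Dbound: "D x y \<le> m" if x: "x \<in> V" and y: "y \<in> V" for x y
  proof -
    have "D x y + 1 \<le> D x (pos x) + D (pos x) y" by (rule D_tri[OF x posV[OF x] y])
    moreover have "D (pos x) y + 1 \<le> D (pos x) (pos y) + D (pos y) y" by (rule D_tri[OF posV[OF x] posV[OF y] y])
    moreover have "D (pos y) y = rx y" using Dpos[OF y] D_sym[OF y posV[OF y]] by simp
    ultimately show ?thesis using Dpos[OF x] Dpp[OF x y] posm[OF x] posm[OF y] rx12[of x] rx12[of y]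
      by (auto split: if_splits)
  qed
  have LP: "\<forall>p. is_path V E p \<longrightarrow> length p \<le> length P"
  proof (intro allI impI)
    fix p assume p: "is_path V E p"
    have "length p = D (hd p) (last p)" using D_eq[OF p] by simp
    also have "\<dots> \<le> m" using Dbound path_in[OF p] by blast
    finally show "length p \<le> length P" using lenP by simp
  qed
  have tauf: "tau V E x = rx x + max (pos x) (m - 1 - pos x)" if x: "x \<in> V" for x
  proof -
    have mn: "\<forall>i<length P. D x (P!pos x) \<le> D x (P!i)"
    proof (intro allI impI)
      fix i assume i: "i < length P"
      have iV: "i \<in> V" using i lenP unfolding V_def N_def by simp
      show "D x (P!pos x) \<le> D x (P!i)"
      proof (cases "x < m")
        case True
        then show ?thesis using Dpos[OF x] D_ge1[OF x iV] Pn posm[OF x] i lenP unfolding rx_def by simp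
      next
        case False
        then have "x \<noteq> i" using i lenP by simp
        then have "D x i \<noteq> 1" using D_one[OF x iV] by blast
        then show ?thesis using Dpos[OF x] D_ge1[OF x iV] Pn posm[OF x] i lenP False unfolding rx_def by simp
      qed
    qed
    show ?thesis using formula[OF P LP x _ mn] posm[OF x] lenP Dpos[OF x] Pn by simp
  qed
  define g where "g = (\<lambda>p. 2 + max p (m - 1 - p))"
  have mapL: "map g L = catl 0 a (\<lambda>j. ks!j - 2) l"
  proof -
    have "map g L = concat (map (\<lambda>j. replicate (ks!j - 2) (g (a - 1 + j))) [0..<l])"
      unfolding L_def by (simp add: map_concat comp_def)
    also have "\<dots> = concat (map (\<lambda>j. replicate (ks!j - 2) (a + 1 + j)) [0..<l])"
    proof (intro arg_cong[where f = concat] map_cong refl)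
      fix j assume "j \<in> set [0..<l]"
      then have "j < l" by simp
      then have "g (a - 1 + j) = a + 1 + j" unfolding g_def l_def using a1 by (simp add: max_def; arith)
      then show "replicate (ks!j - 2) (g (a - 1 + j)) = replicate (ks!j - 2) (a + 1 + j)" by simp
    qed
    finally show ?thesis unfolding catl_def by simp
  qed
  have "detour_seq V E = pat m ks"
  proof (rule detour_eqI[OF finV])
    show "sorted (pat m ks)" unfolding pat_def by (rule catl_sorted)
    fix t
    define A where "A = {v. v < m \<and> 1 + max v (m - 1 - v) = t}"
    define B where "B = {i. i < length L \<and> g (L!i) = t}"
    have split: "{v\<in>V. tau V E v = t} = A \<union> (\<lambda>i. i + m) ` B"
    proof (intro equalityI subsetI)
      fix v assume v: "v \<in> {v\<in>V. tau V E v = t}"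
      then have vV: "v \<in> V" and tv: "tau V E v = t" by auto
      show "v \<in> A \<union> (\<lambda>i. i + m) ` B"
      proof (cases "v < m")
        case True
        then show ?thesis using tauf[OF vV] tv unfolding A_def pos_def rx_def by simp
      next
        case False
        then have "v - m \<in> B" using tauf[OF vV] tv vV unfolding B_def pos_def rx_def g_def V_def N_def by auto
        moreover have "v = (v - m) + m" using False by simp
        ultimately show ?thesis by blast
      qed
    next
      fix v assume "v \<in> A \<union> (\<lambda>i. i + m) ` B"
      then consider "v \<in> A" | i where "i \<in> B" "v = i + m" by blast
      then show "v \<in> {v\<in>V. tau V E v = t}"
      proof cases
        case 1
        then have vV: "v \<in> V" unfolding A_def V_def N_def by auto
        then show ?thesis using tauf[OF vV] 1 unfolding A_def pos_def rx_def by simp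
      next
        case 2
        then have vV: "v \<in> V" unfolding B_def V_def N_def by auto
        then show ?thesis using tauf[OF vV] 2 unfolding B_def pos_def rx_def g_def by simp
      qed
    qed
    have disj: "A \<inter> (\<lambda>i. i + m) ` B = {}" unfolding A_def by auto
    have "card {v\<in>V. tau V E v = t} = card A + card B"
      unfolding split by (subst card_Un_disjoint) (auto simp: A_def B_def disj card_image inj_on_def)
    moreover have "card B = count (mset (map g L)) t"
    proof -
      have "{i. i < length (map g L) \<and> (=) t (map g L ! i)} = B" unfolding B_def by auto
      then show ?thesis unfolding count_mset count_list_eq_length_filter length_filter_conv_card by simp
    qed
    moreover have "card A = (if t = aa m then kk m else if aa m < t \<and> t \<le> m then 2 else 0)"
      unfolding A_def by (rule spine_count[OF m1])
    ultimately have "card {v\<in>V. tau V E v = t} =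
        (if t = a then kk m else if a < t \<and> t \<le> m then 2 else 0) + count (mset (catl 0 a (\<lambda>j. ks!j - 2) l)) t"
      using mapL unfolding a_def by simp
    also have "\<dots> = count (mset (pat m ks)) t"
    proof -
      have k2: "2 \<le> ks!(t - Suc a)" if "a < t" "t \<le> m"
        using ks2[rule_format, of "t - Suc a"] lks that unfolding a_def by auto
      show ?thesis unfolding pat_def catl_count using k2 lks a1 unfolding a_def[symmetric] l_def[symmetric]
        by (auto simp: l_def)
    qed
    finally show "card {v\<in>V. tau V E v = t} = count (mset (pat m ks)) t" .
  qed
  then show ?thesis using T by blast
qed


lemma rep22: "replicate 2 (2::nat) = [2, 2]" by (simp add: numeral_2_eq_2)

lemma ceil_aa: "nat \<lceil>real (m + 1) / 2\<rceil> = aa m"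
proof -
  have "\<lceil>real (m + 1) / 2\<rceil> = int (aa m)"
  proof (cases "odd m")
    case True
    then obtain q where q: "m = 2*q+1" by (metis oddE)
    then have "real (m + 1) / 2 = real (q + 1)" by simp
    moreover have "aa m = q + 1" unfolding aa_def q by simp
    ultimately show ?thesis by (simp only: ceiling_of_nat)
  next
    case False
    then obtain q where q: "m = 2*q" by (metis evenE)
    have "aa m = q + 1" unfolding aa_def q by simp
    moreover have "real (m + 1) / 2 = real q + 1/2" unfolding q by (simp add: field_simps)
    ultimately show ?thesis by (simp add: ceiling_eq_iff)
  qed
  then show ?thesis by simp
qed

lemma pat_unfold: "pat m ks = replicate (if odd m then 1 else 2) (nat \<lceil>real (m + 1) / 2\<rceil>) @
    concat (map (\<lambda>j. replicate (ks ! j) (nat \<lceil>real (m + 1) / 2\<rceil> + 1 + j)) [0..<m - nat \<lceil>real (m + 1) / 2\<rceil>])"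
  unfolding pat_def catl_def kk_def ceil_aa by simp

theorem theorem1p11:
  fixes s :: "nat list"
  assumes "sorted s" and "\<forall>x\<in>set s. 0 < x"
  shows "(\<exists>(V :: nat set) E. is_tree V E \<and> detour_seq V E = s) \<longleftrightarrow>
    (s = [1] \<or> s = [2, 2] \<or>
     (\<exists>m a l k ks. m \<ge> 3 \<and> a = nat \<lceil>real (m + 1) / 2\<rceil> \<and> l = m - a
        \<and> k = (if odd m then 1 else 2)
        \<and> length ks = l \<and> (\<forall>j<l. ks ! j \<ge> 2)
        \<and> s = replicate k a @ concat (map (\<lambda>j. replicate (ks ! j) (a + 1 + j)) [0..<l])))"
proof
  assume "\<exists>(V :: nat set) E. is_tree V E \<and> detour_seq V E = s"
  then obtain V :: "nat set" and E where T: "is_tree V E" and ds: "detour_seq V E = s" by blast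
  interpret tr V E by (rule tr.intro[OF T])
  obtain m ks where m1: "m \<ge> 1" and lks: "length ks = m - aa m" and ks2: "\<forall>j<length ks. ks!j \<ge> 2"
    and sp: "detour_seq V E = pat m ks" using necessity by blast
  have seq: "s = pat m ks" using ds sp by simp
  consider "m = 1" | "m = 2" | "m \<ge> 3" using m1 by linarith
  then show "s = [1] \<or> s = [2, 2] \<or>
     (\<exists>m a l k ks. m \<ge> 3 \<and> a = nat \<lceil>real (m + 1) / 2\<rceil> \<and> l = m - a
        \<and> k = (if odd m then 1 else 2)
        \<and> length ks = l \<and> (\<forall>j<l. ks ! j \<ge> 2)
        \<and> s = replicate k a @ concat (map (\<lambda>j. replicate (ks ! j) (a + 1 + j)) [0..<l]))"
  proof cases
    case 1
    then have "s = [1]" using seq unfolding pat_def catl_def kk_def aa_def by simp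
    then show ?thesis by simp
  next
    case 2
    have "aa 2 = 2" "kk 2 = 2" by (simp_all add: aa_def kk_def)
    then have "s = [2, 2]" using seq 2 rep22 unfolding pat_def catl_def by simp
    then show ?thesis by simp
  next
    case 3
    have "\<exists>m a l k ks. m \<ge> 3 \<and> a = nat \<lceil>real (m + 1) / 2\<rceil> \<and> l = m - a
        \<and> k = (if odd m then 1 else 2)
        \<and> length ks = l \<and> (\<forall>j<l. ks ! j \<ge> 2)
        \<and> s = replicate k a @ concat (map (\<lambda>j. replicate (ks ! j) (a + 1 + j)) [0..<l])"
      apply (rule exI[of _ m], rule exI[of _ "aa m"], rule exI[of _ "m - aa m"],
          rule exI[of _ "if odd m then 1 else 2"], rule exI[of _ ks])
      using 3 lks ks2 seq pat_unfold[of m ks] ceil_aa[of m] by auto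
    then show ?thesis by blast
  qed
next
  assume "s = [1] \<or> s = [2, 2] \<or>
     (\<exists>m a l k ks. m \<ge> 3 \<and> a = nat \<lceil>real (m + 1) / 2\<rceil> \<and> l = m - a
        \<and> k = (if odd m then 1 else 2)
        \<and> length ks = l \<and> (\<forall>j<l. ks ! j \<ge> 2)
        \<and> s = replicate k a @ concat (map (\<lambda>j. replicate (ks ! j) (a + 1 + j)) [0..<l]))"
  then consider "s = [1]" | "s = [2, 2]" |
    m ks where "m \<ge> 3" "length ks = m - aa m" "\<forall>j<m - aa m. ks ! j \<ge> 2" "s = pat m ks"
  proof -
    assume c1: "s = [1] \<Longrightarrow> thesis" and c2: "s = [2, 2] \<Longrightarrow> thesis"
      and c3: "\<And>m ks. m \<ge> 3 \<Longrightarrow> length ks = m - aa m \<Longrightarrow> \<forall>j<m - aa m. ks ! j \<ge> 2 \<Longrightarrow> s = pat m ks \<Longrightarrow> thesis"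
    assume h: "s = [1] \<or> s = [2, 2] \<or>
     (\<exists>m a l k ks. m \<ge> 3 \<and> a = nat \<lceil>real (m + 1) / 2\<rceil> \<and> l = m - a
        \<and> k = (if odd m then 1 else 2)
        \<and> length ks = l \<and> (\<forall>j<l. ks ! j \<ge> 2)
        \<and> s = replicate k a @ concat (map (\<lambda>j. replicate (ks ! j) (a + 1 + j)) [0..<l]))"
    show thesis
    proof (cases "s = [1] \<or> s = [2, 2]")
      case True then show ?thesis using c1 c2 by blast
    next
      case False
      then obtain m a l k ks where m: "m \<ge> 3" "a = nat \<lceil>real (m + 1) / 2\<rceil>" "l = m - a"
        "k = (if odd m then 1 else 2)" "length ks = l" "\<forall>j<l. ks ! j \<ge> 2"
        "s = replicate k a @ concat (map (\<lambda>j. replicate (ks ! j) (a + 1 + j)) [0..<l])"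
        using h by blast
      have "s = pat m ks" using m(2-4,7) pat_unfold[of m ks] by simp
      moreover have "a = aa m" using m(2) ceil_aa by simp
      ultimately show ?thesis using c3[of m ks] m by simp
    qed
  qed
  then show "\<exists>(V :: nat set) E. is_tree V E \<and> detour_seq V E = s"
  proof cases
    case 1
    have "pat 1 [] = [1]" unfolding pat_def catl_def kk_def aa_def by simp
    then show ?thesis using sufficiency[of 1 "[]"] 1 unfolding aa_def by simp
  next
    case 2
    have a2: "aa 2 = 2" "kk 2 = 2" by (simp_all add: aa_def kk_def)
    then have "pat 2 [] = [2, 2]" using rep22 unfolding pat_def catl_def by simp
    then show ?thesis using sufficiency[of 2 "[]"] 2 a2 by simp
  next
    case 3
    then show ?thesis using sufficiency[of m ks] by simp
  qed
qed

end
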